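(* (Rolle's theorem for $\alpha$-fractional differentiable functions.) Let $0<a<b$ and let $f:[a,b]\to\mathbb{R}$ be a function such that (1) $f$ is continuous on $[a,b]$, (2) $f$ is $\alpha$-differentiable at every point of $(a,b)$ for some $\alpha\in(0,1)$, and (3) $f(a)=f(b)$. Then there exists $c\in(a,b)$ such that $\mathcal{D}^\alpha(f)(c)=0$.
   Context: For a real function $f$, a point $t>0$ in the interior of its domain, and $\alpha\in(0,1)$, the $\alpha$-fractional derivative of $f$ at $t$ is $\mathcal{D}^\alpha(f)(t)=\lim_{\epsilon\to 0}\frac{f(te^{\epsilon t^{-\alpha}})-f(t)}{\epsilon}$, and $f$ is $\alpha$-differentiable at $t$ if this limit exists (as a real number). *)

theory Defs
  imports "HOL-Analysis.Analysis"
begin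

definition frac_quot :: "real \<Rightarrow> (real \<Rightarrow> real) \<Rightarrow> real \<Rightarrow> real \<Rightarrow> real" where
  "frac_quot \<alpha> f t \<epsilon> = (f (t * exp (\<epsilon> * t powr (- \<alpha>))) - f t) / \<epsilon>"

definition frac_differentiable :: "real \<Rightarrow> (real \<Rightarrow> real) \<Rightarrow> real \<Rightarrow> bool" where
  "frac_differentiable \<alpha> f t \<longleftrightarrow> (\<exists>L. (frac_quot \<alpha> f t \<longlongrightarrow> L) (at 0))"

definition frac_deriv :: "real \<Rightarrow> (real \<Rightarrow> real) \<Rightarrow> real \<Rightarrow> real" where
  "frac_deriv \<alpha> f t = Lim (at 0) (frac_quot \<alpha> f t)"

end

theory Submission
  imports Defs
begin

lemma key:
  fixes f :: "real \<Rightarrow> real"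
  assumes c: "c \<in> {a<..<b}" and mx: "\<forall>y\<in>{a..b}. f y \<le> f c"
    and lim: "(frac_quot \<alpha> f c \<longlongrightarrow> L) (at 0)"
  shows "L = 0"
proof -
  define g where "g = (\<lambda>e::real. c * exp (e * c powr (- \<alpha>)))"
  have "isCont g 0" unfolding g_def by (intro continuous_intros)
  hence "(g \<longlongrightarrow> g 0) (at 0)" by (simp add: isCont_def)
  moreover have "g 0 = c" by (simp add: g_def)
  ultimately have ev: "eventually (\<lambda>e. g e \<in> {a<..<b}) (at 0)"
    using c by (metis open_greaterThanLessThan topological_tendstoD)
  have le: "\<And>e. g e \<in> {a<..<b} \<Longrightarrow> f (g e) - f c \<le> 0" using mx by auto
  have lr: "eventually (\<lambda>e. g e \<in> {a<..<b}) (at_right 0)"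
       "eventually (\<lambda>e. g e \<in> {a<..<b}) (at_left 0)"
    using ev eventually_at_split by blast+
  have "eventually (\<lambda>e. frac_quot \<alpha> f c e \<le> 0) (at_right 0)"
    using lr(1) eventually_at_right_less[of 0]
  proof (eventually_elim)
    case (elim e) thus ?case using le[of e] unfolding frac_quot_def g_def
      by (simp add: divide_nonpos_pos)
  qed
  moreover have "(frac_quot \<alpha> f c \<longlongrightarrow> L) (at_right 0)"
    using lim filterlim_at_split by blast
  ultimately have L1: "L \<le> 0"
    by (metis tendsto_upperbound trivial_limit_at_right_real)
  have "eventually (\<lambda>e. frac_quot \<alpha> f c e \<ge> 0) (at_left 0)"
    using lr(2) eventually_at_left_real[of "-1::real" 0, OF neg_less_0_iff_less[THEN iffD2, OF zero_less_one]]
  proof (eventually_elim)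
    case (elim e) thus ?case using le[of e] unfolding frac_quot_def g_def
      by (simp add: divide_nonpos_neg)
  qed
  moreover have "(frac_quot \<alpha> f c \<longlongrightarrow> L) (at_left 0)"
    using lim filterlim_at_split by blast
  ultimately have L2: "L \<ge> 0"
    by (metis tendsto_lowerbound trivial_limit_at_left_real)
  show ?thesis using L1 L2 by simp
qed

lemma key2:
  fixes f :: "real \<Rightarrow> real"
  assumes c: "c \<in> {a<..<b}" and mx: "(\<forall>y\<in>{a..b}. f y \<le> f c) \<or> (\<forall>y\<in>{a..b}. f c \<le> f y)"
    and d: "frac_differentiable \<alpha> f c"
  shows "frac_deriv \<alpha> f c = 0"
proof -
  obtain L where lim: "(frac_quot \<alpha> f c \<longlongrightarrow> L) (at 0)"
    using d unfolding frac_differentiable_def by blast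
  have "L = 0"
  proof (cases "\<forall>y\<in>{a..b}. f y \<le> f c")
    case True show ?thesis using key[OF c True lim] .
  next
    case False
    hence m: "\<forall>y\<in>{a..b}. (\<lambda>x. - f x) y \<le> (\<lambda>x. - f x) c" using mx by auto
    have "frac_quot \<alpha> (\<lambda>x. - f x) c = (\<lambda>e. - frac_quot \<alpha> f c e)"
      by (auto simp: frac_quot_def fun_eq_iff minus_divide_left)
    hence "(frac_quot \<alpha> (\<lambda>x. - f x) c \<longlongrightarrow> - L) (at 0)"
      using tendsto_minus[OF lim] by simp
    from key[OF c m this] show ?thesis by simp
  qed
  moreover have "frac_deriv \<alpha> f c = L"
    unfolding frac_deriv_def using lim by (simp add: tendsto_Lim)
  ultimately show ?thesis by simp
qed

theorem mainTheorem5: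
  fixes f :: "real \<Rightarrow> real" and a b \<alpha> :: real
  assumes "0 < a" and "a < b"
    and "0 < \<alpha>" and "\<alpha> < 1"
    and "continuous_on {a..b} f"
    and "\<forall>t\<in>{a<..<b}. frac_differentiable \<alpha> f t"
    and "f a = f b"
  shows "\<exists>c\<in>{a<..<b}. frac_deriv \<alpha> f c = 0"
proof -
  have ne: "{a..b} \<noteq> {}" using assms(2) by simp
  obtain x where x: "x \<in> {a..b}" "\<forall>y\<in>{a..b}. f y \<le> f x"
    using continuous_attains_sup[OF compact_Icc ne assms(5)] by blast
  obtain z where z: "z \<in> {a..b}" "\<forall>y\<in>{a..b}. f z \<le> f y"
    using continuous_attains_inf[OF compact_Icc ne assms(5)] by blast
  have "\<exists>c\<in>{a<..<b}. (\<forall>y\<in>{a..b}. f y \<le> f c) \<or> (\<forall>y\<in>{a..b}. f c \<le> f y)"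
  proof (cases "x \<in> {a<..<b}")
    case True thus ?thesis using x by blast
  next
    case F1: False
    show ?thesis
    proof (cases "z \<in> {a<..<b}")
      case True thus ?thesis using z by blast
    next
      case False
      have "f x = f a" "f z = f a" using F1 False x(1) z(1) assms(7) by auto
      hence "\<forall>y\<in>{a..b}. f y = f a" using x z by force
      moreover have "(a+b)/2 \<in> {a<..<b}" using assms(2) by simp
      ultimately show ?thesis by (metis greaterThanLessThan_iff atLeastAtMost_iff order_refl less_imp_le)
    qed
  qed
  then obtain c where "c \<in> {a<..<b}" "(\<forall>y\<in>{a..b}. f y \<le> f c) \<or> (\<forall>y\<in>{a..b}. f c \<le> f y)" by blast
  thus ?thesis using key2 assms(6) by blast
qed

end
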